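(* Let $n\ge1$ and let $\mathcal{G}_n\subset GL_n(\mathbb{Z})$ be the group generated by the linear maps $\sigma_1,\dotsc,\sigma_n$ of $\mathbb{Z}^n$ which, in coordinates $x=(x_1,\dotsc,x_n)$, are \[ \sigma_1:\ x_{2i}\mapsto x_{2i}+x_1,\quad x_{2i-1}\mapsto x_{2i-1}\quad(\text{all admissible } i), \] \[ \sigma_i\ (2\le i\le n):\ x_{i-1}\mapsto x_{i-2}+x_{i-1}-x_i,\quad x_j\mapsto x_j\ (j\ne i-1), \] with the convention $x_0=0$. Let \[ J(x,y)=\sum_{i=1}^{n-1}\left(x_iy_{i+1}-x_{i+1}y_i\right). \] If $n$ is even, then $J$ is non-degenerate and $J(gx,gy)=J(x,y)$ for all $g\in\mathcal{G}_n$ and all $x,y$. If $n$ is odd, then $J(\sigma_ix,\sigma_iy)=J(x,y)$ for all $i\ge2$ and all $x,y$, and the kernel of $J$ (the set of $x$ with $J(x,y)=0$ for all $y$, as a form on $\mathbb{Q}^n$) is one-dimensional.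
   Context: These coordinates arise as follows: if $k=(k_1,\dotsc,k_n)$ and $x_i=k_i-k_{i-1}+k_{i-2}-\dotsb+(-1)^{i+1}k_1$ (equivalently $k_i=x_{i-1}+x_i$, $x_0=0$), then the maps above are the maps $\sigma_1: k_1\mapsto k_1,\ k_j\mapsto k_j+k_1\ (j>1)$ and, for $i\ge2$, $\sigma_i: k_{i-1}\mapsto 2k_{i-1}-k_i,\ k_i\mapsto k_{i-1},\ k_j\mapsto k_j\ (j\ne i-1,i)$. *)

theory Defs
  imports Complex_Main
begin

text \<open>Vectors of Z^n (or Q^n) are modelled as functions nat => 'a whose
  components are indexed by 1..n and vanish outside {1..n}.\<close>

definition vecs :: "nat \<Rightarrow> (nat \<Rightarrow> 'a::zero) set" where
  "vecs n = {x. \<forall>j. (j < 1 \<or> n < j) \<longrightarrow> x j = 0}"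

definition sigma :: "nat \<Rightarrow> nat \<Rightarrow> (nat \<Rightarrow> int) \<Rightarrow> (nat \<Rightarrow> int)" where
  "sigma n i x = (\<lambda>j.
     if j < 1 \<or> n < j then 0
     else if i = 1 then (if even j then x j + x 1 else x j)
     else if j = i - 1 then (if i = 2 then 0 else x (i - 2)) + x (i - 1) - x i
     else x j)"

inductive_set Ggroup :: "nat \<Rightarrow> ((nat \<Rightarrow> int) \<Rightarrow> (nat \<Rightarrow> int)) set" for n where
  id_in: "(\<lambda>x. x) \<in> Ggroup n"
| gen: "g \<in> Ggroup n \<Longrightarrow> 1 \<le> i \<Longrightarrow> i \<le> n \<Longrightarrow> sigma n i \<circ> g \<in> Ggroup n"
| gen_inv: "g \<in> Ggroup n \<Longrightarrow> 1 \<le> i \<Longrightarrow> i \<le> n \<Longrightarrow>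
     the_inv_into (vecs n) (sigma n i) \<circ> g \<in> Ggroup n"

definition J :: "nat \<Rightarrow> (nat \<Rightarrow> 'a::comm_ring) \<Rightarrow> (nat \<Rightarrow> 'a) \<Rightarrow> 'a" where
  "J n x y = (\<Sum>i = 1..n - 1. x i * y (i + 1) - x (i + 1) * y i)"

definition Jker :: "nat \<Rightarrow> (nat \<Rightarrow> rat) set" where
  "Jker n = {x \<in> vecs n. \<forall>y \<in> vecs n. J n x y = 0}"

end

theory Submission
  imports Defs
begin

lemma vecs_iff: "x \<in> vecs n \<longleftrightarrow> (\<forall>j. (j < 1 \<or> n < j) \<longrightarrow> x j = 0)"
  by (simp add: vecs_def)

lemma shift_sum:
  fixes x y :: "nat \<Rightarrow> 'a::comm_ring"
  assumes "x 0 = 0"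
  shows "(\<Sum>i = 1..m. x i * y (i + 1)) = (\<Sum>j = 1..m+1. x (j - 1) * y j)"
proof (induction m)
  case 0
  then show ?case using assms by simp
next
  case (Suc m)
  then show ?case by simp
qed

lemma J_formula:
  fixes x y :: "nat \<Rightarrow> 'a::comm_ring"
  assumes n: "n \<ge> 1" and x: "x \<in> vecs n"
  shows "J n x y = (\<Sum>j = 1..n. y j * (x (j - 1) - x (j + 1)))"
proof -
  have x0: "x 0 = 0" and xn: "x (n+1) = 0" using x by (auto simp: vecs_iff)
  have "J n x y = (\<Sum>i = 1..n - 1. x i * y (i + 1)) - (\<Sum>i = 1..n - 1. x (i + 1) * y i)"
    unfolding J_def by (simp add: sum_subtractf)
  also have "(\<Sum>i = 1..n - 1. x i * y (i + 1)) = (\<Sum>j = 1..n. x (j - 1) * y j)"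
    using shift_sum[of x y "n - 1", OF x0] n by simp
  also have "(\<Sum>i = 1..n - 1. x (i + 1) * y i) = (\<Sum>i = 1..n. x (i + 1) * y i)"
  proof -
    obtain m where m: "n = Suc m" using n by (cases n) auto
    show ?thesis using xn unfolding m by simp
  qed
  finally show ?thesis by (simp add: sum_subtractf algebra_simps)
qed

lemma J_add_left:
  fixes x y z :: "nat \<Rightarrow> 'a::comm_ring"
  shows "J n (\<lambda>j. x j + z j) y = J n x y + J n z y"
  unfolding J_def by (simp add: sum.distrib[symmetric] algebra_simps)

lemma J_add_right:
  fixes x y z :: "nat \<Rightarrow> 'a::comm_ring"
  shows "J n x (\<lambda>j. y j + z j) = J n x y + J n x z"
  unfolding J_def by (simp add: sum.distrib[symmetric] algebra_simps)

lemma J_scale_left: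
  fixes x y :: "nat \<Rightarrow> 'a::comm_ring"
  shows "J n (\<lambda>j. c * x j) y = c * J n x y"
  unfolding J_def by (simp add: sum_distrib_left algebra_simps)

lemma J_scale_right:
  fixes x y :: "nat \<Rightarrow> 'a::comm_ring"
  shows "J n x (\<lambda>j. c * y j) = c * J n x y"
  unfolding J_def by (simp add: sum_distrib_left algebra_simps)

lemma J_antisym:
  fixes x y :: "nat \<Rightarrow> 'a::comm_ring"
  shows "J n x y = - J n y x"
  unfolding J_def by (simp add: sum_negf[symmetric] algebra_simps)

lemma J_self:
  fixes x :: "nat \<Rightarrow> 'a::comm_ring"
  shows "J n x x = 0"
  unfolding J_def by (simp add: mult.commute)

lemma J_expand:
  fixes x y u :: "nat \<Rightarrow> 'a::comm_ring"
  shows "J n (\<lambda>j. x j + a * u j) (\<lambda>j. y j + b * u j)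
       = J n x y + b * J n x u - a * J n y u"
proof -
  have "J n (\<lambda>j. x j + a * u j) (\<lambda>j. y j + b * u j)
     = J n x y + b * J n x u + (a * J n u y + a * (b * J n u u))"
    by (simp add: J_add_left J_add_right J_scale_left J_scale_right algebra_simps)
  also have "\<dots> = J n x y + b * J n x u - a * J n y u"
    using J_antisym[of n u y] J_self[of n u] by (simp add: algebra_simps)
  finally show ?thesis .
qed

definition delta :: "nat \<Rightarrow> nat \<Rightarrow> 'a::comm_ring_1" where
  "delta k = (\<lambda>j. if j = k then 1 else 0)"

lemma J_delta:
  fixes x :: "nat \<Rightarrow> 'a::comm_ring_1"
  assumes n: "n \<ge> 1" and x: "x \<in> vecs n" and k: "1 \<le> k" "k \<le> n"
  shows "J n x (delta k) = x (k - 1) - x (k + 1)"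
proof -
  have "\<And>j. (if j = k then 1 else 0) * (x (j - 1) - x (j + 1)) = (if j = k then (x (k - 1) - x (k + 1)) else (0::'a))"
    by simp
  then show ?thesis using k by (simp add: J_formula[OF n x] delta_def del: One_nat_def)
qed

definition evv :: "nat \<Rightarrow> nat \<Rightarrow> 'a::comm_ring_1" where
  "evv n = (\<lambda>j. if 1 \<le> j \<and> j \<le> n \<and> even j then 1 else 0)"

lemma evv_vecs: "evv n \<in> vecs n" by (simp add: vecs_iff evv_def)

lemma J_evv:
  fixes x :: "nat \<Rightarrow> 'a::comm_ring_1"
  assumes n: "n \<ge> 1" "even n" and x: "x \<in> vecs n"
  shows "J n x (evv n) = x 1"
proof -
  have "J n (evv n) x = (\<Sum>j = 1..n. x j * (evv n (j - 1) - evv n (j + 1)))"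
    using J_formula[OF n(1) evv_vecs] by simp
  also have "\<dots> = (\<Sum>j = 1..n. if j = 1 then - x 1 else 0)"
  proof (rule sum.cong)
    fix j assume j: "j \<in> {1..n}"
    show "x j * (evv n (j - 1) - evv n (j + 1)) = (if j = 1 then - x 1 else 0)"
    proof (cases "even j")
      case True then show ?thesis using j by (auto simp: evv_def)
    next
      case False
      then have "j + 1 \<le> n" using j n(2) by (simp; presburger)
      then show ?thesis using j False by (auto simp: evv_def)
    qed
  qed simp
  also have "\<dots> = - x 1" using n by simp
  finally show ?thesis using J_antisym[of n x "evv n"] by simp
qed

lemma sigma_vecs: "sigma n i x \<in> vecs n"
  by (simp add: vecs_iff sigma_def)

lemma sigma_ge2:
  assumes i: "2 \<le> i" "i \<le> n" and x: "x \<in> vecs n"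
  shows "sigma n i x = (\<lambda>j. x j + (x (i - 2) - x i) * delta (i - 1) j)"
proof
  fix j
  have x0: "x 0 = 0" using x by (simp add: vecs_iff)
  show "sigma n i x j = x j + (x (i - 2) - x i) * delta (i - 1) j"
    using i x x0 by (auto simp: sigma_def delta_def vecs_iff)
qed

lemma sigma_1:
  assumes x: "x \<in> vecs n"
  shows "sigma n 1 x = (\<lambda>j. x j + x 1 * evv n j)"
proof
  fix j
  show "sigma n 1 x j = x j + x 1 * evv n j"
    using x by (auto simp: sigma_def evv_def vecs_iff)
qed

lemma sigma_inv_J:
  assumes n: "n \<ge> 1" and i: "1 \<le> i" "i \<le> n" and ev: "i = 1 \<Longrightarrow> even n"
    and x: "x \<in> vecs n" and y: "y \<in> vecs n"
  shows "J n (sigma n i x) (sigma n i y) = J n x y"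
proof (cases "i = 1")
  case True
  then show ?thesis using J_expand[of n x "x 1" "evv n" y "y 1"] J_evv[OF n ev[OF True] x]
      J_evv[OF n ev[OF True] y] sigma_1[OF x] sigma_1[OF y] by (simp add: algebra_simps)
next
  case False
  then have i2: "2 \<le> i" using i by simp
  have dx: "J n x (delta (i - 1)) = x (i - 2) - x i"
    using J_delta[OF n x, of "i - 1"] i2 i by (simp add: numeral_2_eq_2 Suc_diff_Suc)
  have dy: "J n y (delta (i - 1)) = y (i - 2) - y i"
    using J_delta[OF n y, of "i - 1"] i2 i by (simp add: numeral_2_eq_2 Suc_diff_Suc)
  have "J n (sigma n i x) (sigma n i y) = J n x y + (y (i - 2) - y i) * J n x (delta (i - 1))
         - (x (i - 2) - x i) * J n y (delta (i - 1))"
    unfolding sigma_ge2[OF i2 i(2) x] sigma_ge2[OF i2 i(2) y] by (rule J_expand)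
  then show ?thesis unfolding dx dy by simp
qed


definition tau :: "nat \<Rightarrow> nat \<Rightarrow> (nat \<Rightarrow> int) \<Rightarrow> (nat \<Rightarrow> int)" where
  "tau n i x = (\<lambda>j.
     if j < 1 \<or> n < j then 0
     else if i = 1 then (if even j then x j - x 1 else x j)
     else if j = i - 1 then x (i - 1) - x (i - 2) + x i
     else x j)"

lemma tau_vecs: "tau n i x \<in> vecs n"
  by (simp add: vecs_iff tau_def)

lemma sigma_tau:
  assumes i: "1 \<le> i" "i \<le> n" and x: "x \<in> vecs n"
  shows "sigma n i (tau n i x) = x"
proof
  fix j
  show "sigma n i (tau n i x) j = x j"
    using i x by (auto simp: sigma_def tau_def vecs_iff)
qed

lemma tau_sigma:
  assumes i: "1 \<le> i" "i \<le> n" and x: "x \<in> vecs n"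
  shows "tau n i (sigma n i x) = x"
proof
  fix j
  show "tau n i (sigma n i x) j = x j"
    using i x by (auto simp: sigma_def tau_def vecs_iff)
qed

lemma inv_eq_tau:
  assumes i: "1 \<le> i" "i \<le> n" and x: "x \<in> vecs n"
  shows "the_inv_into (vecs n) (sigma n i) x = tau n i x"
proof (rule the_inv_into_f_eq)
  show "inj_on (sigma n i) (vecs n)"
    by (rule inj_onI) (metis tau_sigma[OF i])
  show "sigma n i (tau n i x) = x" by (rule sigma_tau[OF i x])
  show "tau n i x \<in> vecs n" by (rule tau_vecs)
qed

lemma G_inv:
  assumes n: "n \<ge> 1" "even n" and g: "g \<in> Ggroup n"
  shows "(\<forall>x\<in>vecs n. g x \<in> vecs n) \<and> (\<forall>x\<in>vecs n. \<forall>y\<in>vecs n. J n (g x) (g y) = J n x y)"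
  using g
proof (induction rule: Ggroup.induct)
  case id_in
  then show ?case by simp
next
  case (gen g i)
  then show ?case using sigma_vecs sigma_inv_J[OF n(1) gen(2,3)] n(2) by simp
next
  case (gen_inv g i)
  have tv: "\<And>x. x \<in> vecs n \<Longrightarrow> the_inv_into (vecs n) (sigma n i) x \<in> vecs n"
    using inv_eq_tau[OF gen_inv(2,3)] tau_vecs by simp
  have tJ: "J n (the_inv_into (vecs n) (sigma n i) x) (the_inv_into (vecs n) (sigma n i) y) = J n x y"
    if "x \<in> vecs n" "y \<in> vecs n" for x y
  proof -
    have "J n x y = J n (sigma n i (tau n i x)) (sigma n i (tau n i y))"
      using sigma_tau[OF gen_inv(2,3)] that by simp
    also have "\<dots> = J n (tau n i x) (tau n i y)"
      by (rule sigma_inv_J[OF n(1) gen_inv(2,3)]) (use n(2) tau_vecs in auto)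
    finally show ?thesis using inv_eq_tau[OF gen_inv(2,3)] that by simp
  qed
  show ?case using gen_inv.IH tv tJ by simp
qed


lemma ker_step:
  assumes n: "n \<ge> 1" and x: "x \<in> Jker n" and k: "1 \<le> k" "k \<le> n"
  shows "x (k - 1) = x (k + 1)"
proof -
  have xv: "x \<in> vecs n" using x by (simp add: Jker_def)
  have "(delta k :: nat \<Rightarrow> rat) \<in> vecs n" using k by (auto simp: vecs_iff delta_def)
  then have "J n x (delta k) = 0" using x by (simp add: Jker_def)
  then show ?thesis using J_delta[OF n xv k] by simp
qed

lemma ker_chain:
  assumes n: "n \<ge> 1" and x: "x \<in> Jker n"
  shows "j \<le> n + 1 \<Longrightarrow> x j = (if even j then 0 else x 1)"
proof (induction j rule: less_induct)
  case (less j)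
  have x0: "x 0 = 0" using x by (simp add: Jker_def vecs_iff)
  show ?case
  proof (cases "j < 2")
    case True
    then show ?thesis using x0 by (cases j) auto
  next
    case False
    have "x (j - 1 - 1) = x (j - 1 + 1)" using ker_step[OF n x, of "j - 1"] False less.prems by simp
    then have "x j = x (j - 2)" using False by (simp add: numeral_2_eq_2)
    also have "\<dots> = (if even (j - 2) then 0 else x 1)" using less.IH[of "j - 2"] less.prems False by simp
    finally show ?thesis using False by simp
  qed
qed

lemma J_zero: "J n (\<lambda>_. 0::'a::comm_ring) y = 0"
  by (simp add: J_def)

lemma ker_even:
  assumes n: "n \<ge> 1" "even n"
  shows "Jker n = {(\<lambda>_. 0)}"
proof
  show "{(\<lambda>_. 0)} \<subseteq> Jker n" by (auto simp: Jker_def vecs_iff J_zero)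
  show "Jker n \<subseteq> {(\<lambda>_. 0)}"
  proof
    fix x assume x: "x \<in> Jker n"
    have xv: "\<And>j. j < 1 \<or> n < j \<Longrightarrow> x j = 0" using x unfolding Jker_def vecs_def by blast
    have "x (n + 1) = x 1" using ker_chain[OF n(1) x, of "n + 1"] n(2) by simp
    then have x1: "x 1 = 0" using xv[of "n + 1"] by simp
    have "x j = 0" for j
    proof (cases "j \<le> n")
      case True then show ?thesis using ker_chain[OF n(1) x, of j] x1 by simp
    next
      case False then show ?thesis using xv by simp
    qed
    then show "x \<in> {(\<lambda>_. 0)}" by auto
  qed
qed

lemma ker_odd:
  assumes n: "n \<ge> 1" "odd n"
  defines "v \<equiv> (\<lambda>j. if 1 \<le> j \<and> j \<le> n \<and> odd j then 1 else 0::rat)"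
  shows "v \<in> vecs n" "v \<noteq> (\<lambda>_. 0)" "Jker n = range (\<lambda>c::rat. (\<lambda>j. c * v j))"
proof -
  show vv: "v \<in> vecs n" by (simp add: v_def vecs_iff)
  have "v 1 = 1" using n by (simp add: v_def)
  then show "v \<noteq> (\<lambda>_. 0)" by (metis zero_neq_one)
  have Jv: "J n v y = 0" for y
  proof -
    have "J n v y = (\<Sum>j = 1..n. y j * (v (j - 1) - v (j + 1)))" by (rule J_formula[OF n(1) vv])
    also have "\<dots> = (\<Sum>j = 1..n. 0)"
    proof (rule sum.cong)
      fix j assume j: "j \<in> {1..n}"
      show "y j * (v (j - 1) - v (j + 1)) = 0"
      proof (cases "even j")
        case True
        then have "j + 1 \<le> n" using j n(2) by (simp; presburger)
        then show ?thesis using j True by (auto simp: v_def)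
      next
        case False then show ?thesis using j by (auto simp: v_def)
      qed
    qed simp
    finally show ?thesis by simp
  qed
  show "Jker n = range (\<lambda>c::rat. (\<lambda>j. c * v j))"
  proof
    show "range (\<lambda>c::rat. (\<lambda>j. c * v j)) \<subseteq> Jker n"
    proof
      fix z assume "z \<in> range (\<lambda>c::rat. (\<lambda>j. c * v j))"
      then obtain c where z: "z = (\<lambda>j. c * v j)" by auto
      have "z \<in> vecs n" using vv by (simp add: z vecs_iff)
      moreover have "J n z y = 0" for y unfolding z J_scale_left Jv by simp
      ultimately show "z \<in> Jker n" by (simp add: Jker_def)
    qed
    show "Jker n \<subseteq> range (\<lambda>c::rat. (\<lambda>j. c * v j))"
    proof
      fix x assume x: "x \<in> Jker n"
      have xv: "\<And>j. j < 1 \<or> n < j \<Longrightarrow> x j = 0" using x unfolding Jker_def vecs_def by blast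
      have h: "x j = x 1 * v j" for j
      proof (cases "1 \<le> j \<and> j \<le> n")
        case True then show ?thesis using ker_chain[OF n(1) x, of j] by (simp add: v_def)
      next
        case False then show ?thesis using xv by (auto simp: v_def)
      qed
      have "x = (\<lambda>j. x 1 * v j)" by (rule ext) (rule h)
      then show "x \<in> range (\<lambda>c::rat. (\<lambda>j. c * v j))" by blast
    qed
  qed
qed

theorem mainTheorem3:
  fixes n :: nat
  assumes "n \<ge> 1"
  shows "(even n \<longrightarrow>
            Jker n = {(\<lambda>_. 0)} \<and>
            (\<forall>g \<in> Ggroup n. \<forall>x \<in> vecs n. \<forall>y \<in> vecs n. J n (g x) (g y) = J n x y))
       \<and> (odd n \<longrightarrow>
            (\<forall>i. 2 \<le> i \<and> i \<le> n \<longrightarrow>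
               (\<forall>x \<in> vecs n. \<forall>y \<in> vecs n. J n (sigma n i x) (sigma n i y) = J n x y))
            \<and> (\<exists>v \<in> vecs n. v \<noteq> (\<lambda>_. 0) \<and> Jker n = range (\<lambda>c::rat. (\<lambda>j. c * v j))))"
proof (intro conjI impI)
  assume e: "even n"
  show "Jker n = {(\<lambda>_. 0)}" by (rule ker_even[OF assms e])
  show "\<forall>g \<in> Ggroup n. \<forall>x \<in> vecs n. \<forall>y \<in> vecs n. J n (g x) (g y) = J n x y"
    using G_inv[OF assms e] by blast
next
  assume o: "odd n"
  show "\<forall>i. 2 \<le> i \<and> i \<le> n \<longrightarrow>
               (\<forall>x \<in> vecs n. \<forall>y \<in> vecs n. J n (sigma n i x) (sigma n i y) = J n x y)"
    using sigma_inv_J[OF assms] by auto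
  show "\<exists>v \<in> vecs n. v \<noteq> (\<lambda>_. 0) \<and> Jker n = range (\<lambda>c::rat. (\<lambda>j. c * v j))"
    using ker_odd[OF assms o] by blast
qed

end
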